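(* Let $G$ be a graph with at least two vertices and let $k$ be an integer with $k\ge k(G)$. Then there exists an acyclic digraph $D$ such that (a) $C(D)=G\cup I_k$; (b) $D$ has an acyclic ordering $v_1,\dots,v_{|V(G)|},v_{|V(G)|+1},\dots,v_{|V(G)|+k}$ where $V(G)=\{v_1,\dots,v_{|V(G)|}\}$ and $V(I_k)=\{v_{|V(G)|+1},\dots,v_{|V(G)|+k}\}$; and (c) $N_D^-(v_1)=N_D^-(v_2)=\emptyset$.
   Context: All graphs are finite and simple. For a digraph $D$, its competition graph $C(D)$ is the graph with vertex set $V(D)$ in which two distinct vertices $u,v$ are adjacent iff there is a vertex $x$ with arcs $(u,x),(v,x)\in A(D)$. The competition number $k(G)$ is the smallest nonnegative integer $k$ such that $G$ together with $k$ new isolated vertices is the competition graph of an acyclic digraph. $I_k$ denotes the edgeless graph on $k$ vertices, and $G\cup I_k$ is the disjoint union of $G$ with $k$ new isolated vertices. An acyclic ordering of a digraph $D$ is an ordering $v_1,\dots,v_{|V(D)|}$ of its vertices such that $(v_i,v_j)\in A(D)$ implies $i<j$. $N_D^-(v)=\{x:(x,v)\in A(D)\}$ is the in-neighborhood. *)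

theory Defs
  imports Main
begin

definition simple_graph :: "'a set \<Rightarrow> ('a \<Rightarrow> 'a \<Rightarrow> bool) \<Rightarrow> bool" where
  "simple_graph V E \<longleftrightarrow> finite V \<and> (\<forall>u v. E u v \<longrightarrow> u \<in> V \<and> v \<in> V \<and> u \<noteq> v \<and> E v u)"

definition digraph :: "'b set \<Rightarrow> ('b \<times> 'b) set \<Rightarrow> bool" where
  "digraph W A \<longleftrightarrow> A \<subseteq> W \<times> W"

definition acyclic_digraph :: "'b set \<Rightarrow> ('b \<times> 'b) set \<Rightarrow> bool" where
  "acyclic_digraph W A \<longleftrightarrow> digraph W A \<and> acyclic A"

definition comp_adj :: "('b \<times> 'b) set \<Rightarrow> 'b \<Rightarrow> 'b \<Rightarrow> bool" where
  "comp_adj A u v \<longleftrightarrow> u \<noteq> v \<and> (\<exists>x. (u, x) \<in> A \<and> (v, x) \<in> A)"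

(* G \<union> I_k: vertices Inl v (v \<in> V) and the k new isolated vertices Inr i (i < k) *)
definition union_verts :: "'a set \<Rightarrow> nat \<Rightarrow> ('a + nat) set" where
  "union_verts V k = Inl ` V \<union> Inr ` {..<k}"

fun union_edges :: "('a \<Rightarrow> 'a \<Rightarrow> bool) \<Rightarrow> ('a + nat) \<Rightarrow> ('a + nat) \<Rightarrow> bool" where
  "union_edges E (Inl u) (Inl v) = E u v"
| "union_edges E _ _ = False"

definition competition_graph_is :: "'b set \<Rightarrow> ('b \<times> 'b) set \<Rightarrow> ('b \<Rightarrow> 'b \<Rightarrow> bool) \<Rightarrow> bool" where
  "competition_graph_is W A F \<longleftrightarrow> (\<forall>u\<in>W. \<forall>v\<in>W. comp_adj A u v \<longleftrightarrow> F u v)"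

definition competition_number :: "'a set \<Rightarrow> ('a \<Rightarrow> 'a \<Rightarrow> bool) \<Rightarrow> nat" where
  "competition_number V E = (LEAST k. \<exists>A. acyclic_digraph (union_verts V k) A
       \<and> competition_graph_is (union_verts V k) A (union_edges E))"

(* acyclic ordering v_1..v_m of D = (W, A), as a list (index 0 is v_1) *)
definition acyclic_ordering :: "'b set \<Rightarrow> ('b \<times> 'b) set \<Rightarrow> 'b list \<Rightarrow> bool" where
  "acyclic_ordering W A vs \<longleftrightarrow> distinct vs \<and> set vs = W \<and>
     (\<forall>i j. i < length vs \<longrightarrow> j < length vs \<longrightarrow> (vs ! i, vs ! j) \<in> A \<longrightarrow> i < j)"

definition in_nbhd :: "('b \<times> 'b) set \<Rightarrow> 'b \<Rightarrow> 'b set" where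
  "in_nbhd A v = {x. (x, v) \<in> A}"

end

theory Submission
  imports Defs
begin

lemma topo:
  assumes "finite S" "wf R"
  shows "\<exists>vs. distinct vs \<and> set vs = S \<and>
     (\<forall>i j. i < length vs \<longrightarrow> j < length vs \<longrightarrow> (vs ! i, vs ! j) \<in> R \<longrightarrow> i < j)"
  using assms(1)
proof (induction "card S" arbitrary: S)
  case 0
  then show ?case by auto
next
  case (Suc m)
  then have "S \<noteq> {}" by auto
  then obtain x where x: "x \<in> S" and xmin: "\<And>y. (y, x) \<in> R \<Longrightarrow> y \<notin> S"
    using wfE_min[OF assms(2)] by blast
  have "m = card (S - {x})" using Suc.hyps(2) x Suc.prems by simp
  then obtain vs where vs: "distinct vs" "set vs = S - {x}"
    "\<forall>i j. i < length vs \<longrightarrow> j < length vs \<longrightarrow> (vs ! i, vs ! j) \<in> R \<longrightarrow> i < j"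
    using Suc.hyps(1) Suc.prems by blast
  show ?case
  proof (intro exI conjI allI impI)
    show "distinct (x # vs)" using vs by auto
    show "set (x # vs) = S" using vs x by auto
    fix i j assume ij: "i < length (x # vs)" "j < length (x # vs)" "((x # vs) ! i, (x # vs) ! j) \<in> R"
    show "i < j"
    proof (cases j)
      case 0
      then have "(x # vs) ! i \<in> S" using ij vs x by (auto simp: nth_Cons split: nat.splits)
      then show ?thesis using ij 0 xmin by auto
    next
      case (Suc j')
      show ?thesis
      proof (cases i)
        case 0 then show ?thesis using Suc by simp
      next
        case (Suc i')
        then show ?thesis using \<open>j = Suc j'\<close> ij vs(3) by auto
      qed
    qed
  qed
qed

lemma arith1: "(a::nat) < n \<Longrightarrow> b < n \<Longrightarrow> c < n \<Longrightarrow> d < n \<Longrightarrow> a*n+b = c*n+d \<Longrightarrow> a = c \<and> b = d"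
  by (metis add_cancel_right_right div_mult_self3 div_less mod_mult_self3 mod_less less_nat_zero_code)

lemma arith2: "(a::nat) < n \<Longrightarrow> b < n \<Longrightarrow> a*n+b < n*n"
proof -
  assume "a < n" "b < n"
  then have "a*n + b < a*n + n" by simp
  also have "\<dots> = (a+1)*n" by simp
  also have "\<dots> \<le> n*n" using \<open>a<n\<close> by (intro mult_right_mono) auto
  finally show ?thesis .
qed


lemma tr_shape:
  assumes "\<And>a b. (a,b) \<in> R \<Longrightarrow> (\<exists>u. a = Inl u) \<and> (\<exists>i. b = Inr i)"
  shows "acyclic R"
proof -
  have "(x,y) \<in> R\<^sup>+ \<Longrightarrow> (\<exists>u. x = Inl u) \<and> (\<exists>i. y = Inr i)" for x y
    by (induction rule: trancl_induct) (use assms in blast)+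
  then show ?thesis unfolding acyclic_def by fastforce
qed

lemma cn_exists:
  fixes V :: "'a set"
  assumes G: "simple_graph V E"
  shows "\<exists>k A. acyclic_digraph (union_verts V k) A
       \<and> competition_graph_is (union_verts V k) A (union_edges E)"
proof -
  have fin: "finite V" using G by (simp add: simple_graph_def)
  obtain f n where fn: "f ` V = {i::nat. i < n}" "inj_on f V"
    using finite_imp_inj_to_nat_seg[OF fin] by blast
  have fl: "u \<in> V \<Longrightarrow> f u < n" for u using fn(1) by auto
  have EV: "E u v \<Longrightarrow> u \<in> V \<and> v \<in> V \<and> u \<noteq> v \<and> E v u" for u v
    using G by (simp add: simple_graph_def)
  define A :: "(('a + nat) \<times> ('a + nat)) set" where "A = {(Inl u, Inr (f u*n+f v)) | u v. E u v} \<union> {(Inl v, Inr (f u*n+f v)) | u v. E u v}"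
  have inj: "E u v \<Longrightarrow> E u' v' \<Longrightarrow> f u*n+f v = f u'*n+f v' \<Longrightarrow> u = u' \<and> v = v'" for u v u' v'
    using arith1[of "f u" n "f v" "f u'" "f v'"] EV fl fn(2) by (metis inj_onD)
  have "acyclic A" by (rule tr_shape) (auto simp: A_def)
  moreover have "digraph (union_verts V (n*n)) A"
    unfolding digraph_def A_def union_verts_def using EV fl arith2 by fastforce
  moreover have "competition_graph_is (union_verts V (n*n)) A (union_edges E)"
    unfolding competition_graph_is_def
  proof (intro ballI)
    fix p q assume "p \<in> union_verts V (n*n)" "q \<in> union_verts V (n*n)"
    show "comp_adj A p q \<longleftrightarrow> union_edges E p q"
    proof
      assume "comp_adj A p q"
      then obtain x where pq: "p \<noteq> q" "(p,x) \<in> A" "(q,x) \<in> A" by (auto simp: comp_adj_def)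
      from pq(2) obtain a u v where a: "p = Inl a" "x = Inr (f u*n+f v)" "E u v" "a = u \<or> a = v"
        unfolding A_def by blast
      from pq(3) obtain b u' v' where b: "q = Inl b" "x = Inr (f u'*n+f v')" "E u' v'" "b = u' \<or> b = v'"
        unfolding A_def by blast
      have "u = u' \<and> v = v'" using inj a b by auto
      then show "union_edges E p q" using a b pq(1) EV by auto
    next
      assume "union_edges E p q"
      then obtain a b where ab: "p = Inl a" "q = Inl b" "E a b"
        by (cases p; cases q) auto
      then have "(p, Inr (f a*n+f b)) \<in> A" "(q, Inr (f a*n+f b)) \<in> A" "p \<noteq> q"
        unfolding A_def using EV by blast+
      then show "comp_adj A p q" by (auto simp: comp_adj_def)
    qed
  qed
  ultimately show ?thesis unfolding acyclic_digraph_def by blast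
qed


theorem lemma2p2:
  fixes V :: "'a set" and E :: "'a \<Rightarrow> 'a \<Rightarrow> bool" and k :: nat
  assumes "simple_graph V E"
    and "card V \<ge> 2"
    and "k \<ge> competition_number V E"
  shows "\<exists>A. acyclic_digraph (union_verts V k) A
           \<and> competition_graph_is (union_verts V k) A (union_edges E)
           \<and> (\<exists>vs. acyclic_ordering (union_verts V k) A vs
                  \<and> set (take (card V) vs) = Inl ` V
                  \<and> set (drop (card V) vs) = Inr ` {..<k}
                  \<and> in_nbhd A (vs ! 0) = {} \<and> in_nbhd A (vs ! 1) = {})"
proof -
  define k0 where "k0 = competition_number V E"
  have "\<exists>A. acyclic_digraph (union_verts V k0) A
       \<and> competition_graph_is (union_verts V k0) A (union_edges E)"
    unfolding k0_def competition_number_def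
    by (rule LeastI_ex) (use cn_exists[OF assms(1)] in blast)
  then obtain A0 where A0: "acyclic A0" "A0 \<subseteq> union_verts V k0 \<times> union_verts V k0"
    "competition_graph_is (union_verts V k0) A0 (union_edges E)"
    unfolding acyclic_digraph_def digraph_def by blast
  have kk: "k0 \<le> k" using assms(3) k0_def by simp
  have fin: "finite V" using assms(1) by (simp add: simple_graph_def)
  have EV: "E u v \<Longrightarrow> u \<in> V \<and> v \<in> V \<and> u \<noteq> v \<and> E v u" for u v
    using assms(1) by (simp add: simple_graph_def)
  let ?Z = "union_verts V k0" and ?W = "union_verts V k"
  have W0W: "?Z \<subseteq> ?W" using kk by (auto simp: union_verts_def)
  define A where "A = {(a,b). (a,b) \<in> A0 \<and> (\<exists>c. c \<noteq> a \<and> (c,b) \<in> A0)}"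
  have AA0: "A \<subseteq> A0" by (auto simp: A_def)
  have comp: "comp_adj A u v \<longleftrightarrow> comp_adj A0 u v" for u v
    unfolding comp_adj_def A_def by auto
  have cg0: "\<And>u v. u \<in> ?Z \<Longrightarrow> v \<in> ?Z \<Longrightarrow> comp_adj A0 u v \<longleftrightarrow> union_edges E u v"
    using A0(3) by (simp add: competition_graph_is_def)
  have outInl: "a \<in> Inl ` V" if "(a,b) \<in> A" for a b
  proof -
    from that obtain c where c: "(a,b) \<in> A0" "c \<noteq> a" "(c,b) \<in> A0" by (auto simp: A_def)
    then have "a \<in> ?Z" "c \<in> ?Z" using A0(2) by auto
    moreover have "comp_adj A0 a c" using c by (auto simp: comp_adj_def)
    ultimately have "union_edges E a c" using cg0 by blast
    then show ?thesis using EV by (cases a; cases c) auto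
  qed
  have cg: "competition_graph_is ?W A (union_edges E)"
    unfolding competition_graph_is_def
  proof (intro ballI)
    fix u v assume uv: "u \<in> ?W" "v \<in> ?W"
    show "comp_adj A u v \<longleftrightarrow> union_edges E u v"
    proof (cases "u \<in> ?Z \<and> v \<in> ?Z")
      case True then show ?thesis using comp cg0 by blast
    next
      case False
      then have "\<not> comp_adj A0 u v" using A0(2) by (auto simp: comp_adj_def)
      moreover have "\<not> union_edges E u v"
        using False uv by (cases u; cases v) (auto simp: union_verts_def)
      ultimately show ?thesis using comp by blast
    qed
  qed
  have acA: "acyclic A" using A0(1) AA0 acyclic_subset by blast
  have dA: "digraph ?W A" using AA0 A0(2) W0W by (auto simp: digraph_def)
  have finW0: "finite ?Z" using fin by (simp add: union_verts_def)
  have "finite A" using AA0 A0(2) finW0 by (meson finite_SigmaI finite_subset subset_trans)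
  then have wfA: "wf A" using acA finite_acyclic_wf by blast
  obtain vs1 where vs1: "distinct vs1" "set vs1 = Inl ` V"
    "\<forall>i j. i < length vs1 \<longrightarrow> j < length vs1 \<longrightarrow> (vs1 ! i, vs1 ! j) \<in> A \<longrightarrow> i < j"
    using topo[OF _ wfA, of "Inl ` V"] fin by blast
  have len: "length vs1 = card V"
    using distinct_card[OF vs1(1)] vs1(2) card_image[of Inl V] by (metis inj_Inl inj_on_subset subset_UNIV)
  define vs where "vs = vs1 @ map Inr [0..<k]"
  have tk: "take (card V) vs = vs1" and dr: "drop (card V) vs = map Inr [0..<k]"
    using len by (auto simp: vs_def)
  have ord: "acyclic_ordering ?W A vs"
    unfolding acyclic_ordering_def
  proof (intro conjI allI impI)
    show "distinct vs" using vs1 by (auto simp: vs_def distinct_map)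
    show "set vs = ?W" using vs1 by (auto simp: vs_def union_verts_def)
    fix i j assume ij: "i < length vs" "j < length vs" "(vs ! i, vs ! j) \<in> A"
    have "vs ! i \<in> Inl ` V" using outInl ij(3) by blast
    then have i: "i < card V"
      using ij(1) len by (cases "i < length vs1") (auto simp: vs_def nth_append)
    show "i < j"
    proof (cases "j < card V")
      case True
      then show ?thesis using i ij vs1(3) len by (auto simp: vs_def nth_append)
    next
      case False then show ?thesis using i by simp
    qed
  qed
  have pred: "\<exists>i<j. y = vs1 ! i" if "(y, vs1 ! j) \<in> A" "j < card V" for y j
  proof -
    have "y \<in> set vs1" using outInl that vs1(2) by blast
    then obtain i where "i < length vs1" "vs1 ! i = y" by (auto simp: in_set_conv_nth)
    then show ?thesis using vs1(3) that len by auto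
  qed
  have v0: "vs ! 0 = vs1 ! 0" "vs ! 1 = vs1 ! 1" using assms(2) len by (auto simp: vs_def nth_append)
  have n0: "in_nbhd A (vs ! 0) = {}"
    using pred[of _ 0] assms(2) v0 by (auto simp: in_nbhd_def)
  have n1: "in_nbhd A (vs ! 1) = {}"
  proof (rule ccontr)
    assume "in_nbhd A (vs ! 1) \<noteq> {}"
    then obtain y where y: "(y, vs1 ! 1) \<in> A" using v0 by (auto simp: in_nbhd_def)
    then have y0: "y = vs1 ! 0" using pred[of y 1] assms(2) by auto
    from y obtain c where c: "c \<noteq> y" "(c, vs1 ! 1) \<in> A0" by (auto simp: A_def)
    have "(c, vs1 ! 1) \<in> A" using c y AA0 by (auto simp: A_def)
    then have "c = vs1 ! 0" using pred[of c 1] assms(2) by auto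
    then show False using c y0 by simp
  qed
  show ?thesis
    using acA dA cg ord tk dr n0 n1 vs1(2)
    by (auto simp: acyclic_digraph_def intro!: exI[of _ A] exI[of _ vs])
qed

end
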